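(* Let $\mathrm{FiF}$ and $\mathrm{OFF}$ be as in the context, serving $q_1,\dots,q_T$ with cache size $k$. For $1\le t\le T$ let $\mathrm{Bel}_t,\mathrm{Off}_t\in\{0,1\}$ be the number of pages fetched by $\mathrm{FiF}$ and by $\mathrm{OFF}$, respectively, when serving $q_t$. Then for every $1\le t\le T$, $$\mathrm{Bel}_t+\Phi(t+1)-\Phi(t)\le \mathrm{Off}_t,$$ and $\Phi(t)\ge 0$ for all $t$. Consequently the total number of fetches of $\mathrm{FiF}$ is at most that of $\mathrm{OFF}$ plus $\Phi(1)$.
   Context: Unweighted paging with a universe $U$ of $n$ pages, cache size $k<n$, and request sequence $q_1,\dots,q_T$. Fix a total order on $U$. For $1\le t\le T+1$, $\mathrm{rank}(\cdot,t)$ is the bijection $U\to\{1,\dots,n\}$ obtained by ordering pages increasingly by the time of their next request in $\{t,\dots,T\}$, with pages not requested in $\{t,\dots,T\}$ placed last, in the fixed order (so $\mathrm{rank}(q_t,t)=1$). $\mathrm{FiF}$ always holds exactly $k$ pages; on a request $q_t$ not in its cache it loads $q_t$ and evicts the page of its cache with the largest $\mathrm{rank}(\cdot,t)$. $\mathrm{OFF}$ is an arbitrary algorithm always holding exactly $k$ pages and containing $q_t$ after serving it. Let $C(t)$, $C^*(t)$ be the caches of $\mathrm{FiF}$ and $\mathrm{OFF}$ just before request $q_t$ is served (for $t=T+1$: after serving $q_T$). Let $n(s,t)=|\{p\in C(t):\mathrm{rank}(p,t)\ge s\}|$, $n^*(s,t)=|\{p\in C^*(t):\mathrm{rank}(p,t)\ge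 s\}|$, and $\Phi(t)=\max_{1\le s\le n}\big(n(s,t)-n^*(s,t)\big)$. *)

theory Defs
  imports Main "HOL-Library.Cardinality"
begin

text \<open>Pages form a finite linearly ordered type 'a (the universe U, n = CARD('a));
  the linear order of 'a is the fixed total order on U. Requests are q 1, ..., q T.\<close>

definition next_req :: "(nat \<Rightarrow> 'a) \<Rightarrow> nat \<Rightarrow> 'a \<Rightarrow> nat \<Rightarrow> nat" where
  "next_req q T p t =
     (if \<exists>s. t \<le> s \<and> s \<le> T \<and> q s = p
      then (LEAST s. t \<le> s \<and> s \<le> T \<and> q s = p) else T + 1)"

text \<open>rank(p,t): position (1-based) of p when pages are ordered by the time of their next
  request in {t..T}; pages not requested there come last, ordered by the fixed order.\<close>
definition rank :: "(nat \<Rightarrow> 'a::{finite,linorder}) \<Rightarrow> nat \<Rightarrow> 'a \<Rightarrow> nat \<Rightarrow> nat" where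
  "rank q T p t = card {p'. next_req q T p' t < next_req q T p t
                        \<or> (next_req q T p' t = next_req q T p t \<and> p' < p)} + 1"

definition ncount :: "(nat \<Rightarrow> 'a::{finite,linorder}) \<Rightarrow> nat \<Rightarrow> 'a set \<Rightarrow> nat \<Rightarrow> nat \<Rightarrow> nat" where
  "ncount q T A s t = card {p \<in> A. s \<le> rank q T p t}"

definition Phi :: "(nat \<Rightarrow> 'a::{finite,linorder}) \<Rightarrow> nat \<Rightarrow> (nat \<Rightarrow> 'a set) \<Rightarrow> (nat \<Rightarrow> 'a set) \<Rightarrow> nat \<Rightarrow> int" where
  "Phi q T C Cs t = Max ((\<lambda>s. int (ncount q T (C t) s t) - int (ncount q T (Cs t) s t)) ` {1..CARD('a)})"

text \<open>C t is the cache of FiF just before request t (C (T+1): after serving q T).\<close>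
definition is_FiF :: "nat \<Rightarrow> (nat \<Rightarrow> 'a::{finite,linorder}) \<Rightarrow> nat \<Rightarrow> (nat \<Rightarrow> 'a set) \<Rightarrow> bool" where
  "is_FiF k q T C \<longleftrightarrow>
     (\<forall>t\<in>{1..T+1}. card (C t) = k) \<and>
     (\<forall>t\<in>{1..T}. C (t + 1) =
        (if q t \<in> C t then C t
         else insert (q t) (C t - {ARG_MAX (\<lambda>p. rank q T p t) p. p \<in> C t})))"

text \<open>Cs t is the cache of an arbitrary algorithm OFF just before request t.\<close>
definition is_OFF :: "nat \<Rightarrow> (nat \<Rightarrow> 'a) \<Rightarrow> nat \<Rightarrow> (nat \<Rightarrow> 'a set) \<Rightarrow> bool" where
  "is_OFF k q T Cs \<longleftrightarrow>
     (\<forall>t\<in>{1..T+1}. card (Cs t) = k) \<and> (\<forall>t\<in>{1..T}. q t \<in> Cs (t + 1))"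

definition fetched :: "(nat \<Rightarrow> 'a set) \<Rightarrow> nat \<Rightarrow> nat" where
  "fetched C t = card (C (t + 1) - C t)"

end

theory Submission imports Defs begin

definition lt :: "(nat \<Rightarrow> 'a::linorder) \<Rightarrow> nat \<Rightarrow> nat \<Rightarrow> 'a \<Rightarrow> 'a \<Rightarrow> bool" where
  "lt q T t a b \<longleftrightarrow> next_req q T a t < next_req q T b t \<or> (next_req q T a t = next_req q T b t \<and> a < b)"

lemma rank_lt: "rank q T p t = card {p'. lt q T t p' p} + 1"
  unfolding rank_def lt_def by simp

lemma lt_trans: "lt q T t a b \<Longrightarrow> lt q T t b c \<Longrightarrow> lt q T t a c"
  unfolding lt_def by auto

lemma lt_irrefl: "\<not> lt q T t a a"
  unfolding lt_def by auto

lemma lt_total: "a \<noteq> b \<Longrightarrow> lt q T t a b \<or> lt q T t b a"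
  unfolding lt_def by (metis linorder_neqE_nat neq_iff)

lemma rank_mono:
  fixes q :: "nat \<Rightarrow> 'a::{finite,linorder}"
  assumes "lt q T t a b" shows "rank q T a t < rank q T b t"
proof -
  have "{p'. lt q T t p' a} \<subset> {p'. lt q T t p' b}"
    using assms lt_trans[of q T t _ a b] lt_irrefl[of q T t a] by blast
  then have "card {p'. lt q T t p' a} < card {p'. lt q T t p' b}"
    by (simp add: psubset_card_mono)
  then show ?thesis by (simp add: rank_lt)
qed

lemma rank_le_n:
  fixes q :: "nat \<Rightarrow> 'a::{finite,linorder}"
  shows "rank q T p t \<le> CARD('a)"
proof -
  have "{p'. lt q T t p' p} \<subseteq> UNIV - {p}" using lt_irrefl by blast
  then have "card {p'. lt q T t p' p} \<le> card (UNIV - {p} :: 'a set)" by (meson card_mono finite)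
  also have "\<dots> = CARD('a) - 1" by (simp add: card_Diff_singleton)
  moreover have "CARD('a) > 0" by simp
  ultimately show ?thesis unfolding rank_lt by linarith
qed

lemma rank_ge1: "rank q T p t \<ge> 1" by (simp add: rank_lt)

lemma next_req_ge: "t \<le> T \<Longrightarrow> next_req q T p t \<ge> t"
  unfolding next_req_def
  by (auto intro: LeastI2_ex)

lemma next_req_self: "t \<le> T \<Longrightarrow> next_req q T (q t) t = t"
  unfolding next_req_def
  by (auto intro!: Least_equality)

lemma next_req_eq_t: "t \<le> T \<Longrightarrow> next_req q T p t = t \<Longrightarrow> q t = p"
proof -
  assume a: "t \<le> T" "next_req q T p t = t"
  show ?thesis
  proof (cases "\<exists>s. t \<le> s \<and> s \<le> T \<and> q s = p")
    case True
    then have "q (LEAST s. t \<le> s \<and> s \<le> T \<and> q s = p) = p" by (rule LeastI2_ex) auto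
    then show ?thesis using a True unfolding next_req_def by simp
  next
    case False
    then have "next_req q T p t = T + 1" unfolding next_req_def by (simp only: if_False)
    then show ?thesis using a by simp
  qed
qed

lemma next_req_shift: "t \<le> T \<Longrightarrow> p \<noteq> q t \<Longrightarrow> next_req q T p (t+1) = next_req q T p t"
proof -
  assume a: "t \<le> T" "p \<noteq> q t"
  have "(\<lambda>s. t+1 \<le> s \<and> s \<le> T \<and> q s = p) = (\<lambda>s. t \<le> s \<and> s \<le> T \<and> q s = p)"
    using a by (auto simp: fun_eq_iff) (metis le_antisym not_less_eq_eq)
  then show ?thesis unfolding next_req_def by (simp only: Suc_eq_plus1)
qed

lemma rank_self: "t \<le> T \<Longrightarrow> rank q T (q t) t = 1"
proof -
  assume a: "t \<le> T"
  have "\<not> lt q T t p' (q t)" for p'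
  proof
    assume h: "lt q T t p' (q t)"
    have g: "next_req q T p' t \<ge> t" using next_req_ge[OF a] .
    have s: "next_req q T (q t) t = t" using next_req_self[OF a] .
    from h g s have "next_req q T p' t = t \<and> p' < q t" unfolding lt_def by linarith
    then show False using next_req_eq_t[OF a, of q p'] by simp
  qed
  then have "{p'. lt q T t p' (q t)} = {}" by blast
  then show ?thesis by (simp add: rank_lt)
qed

lemma lt_first: "t \<le> T \<Longrightarrow> p \<noteq> q t \<Longrightarrow> lt q T t (q t) p"
proof -
  assume a: "t \<le> T" "p \<noteq> q t"
  have g: "next_req q T p t \<ge> t" using next_req_ge[OF a(1)] .
  have s: "next_req q T (q t) t = t" using next_req_self[OF a(1)] .
  have "next_req q T p t \<noteq> t" using next_req_eq_t[OF a(1), of q p] a(2) by auto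
  then show ?thesis unfolding lt_def using g s by linarith
qed

lemma rank_ge2:
  fixes q :: "nat \<Rightarrow> 'a::{finite,linorder}"
  shows "t \<le> T \<Longrightarrow> p \<noteq> q t \<Longrightarrow> rank q T p t \<ge> 2"
proof -
  assume a: "t \<le> T" "p \<noteq> q t"
  show ?thesis using rank_mono[OF lt_first[of t T p q, OF a]] rank_self[OF a(1), of q] by simp
qed


lemma rank_inj:
  fixes q :: "nat \<Rightarrow> 'a::{finite,linorder}"
  shows "rank q T a t = rank q T b t \<Longrightarrow> a = b"
  using lt_total[of a b q T t] rank_mono[of q T t a b] rank_mono[of q T t b a] by auto

lemma rank_trans:
  fixes q :: "nat \<Rightarrow> 'a::{finite,linorder}"
  assumes a: "t \<le> T" "p \<noteq> q t"
  shows "rank q T p (t+1) = rank q T p t - 1 + (if lt q T (t+1) (q t) p then 1 else 0)"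
proof -
  have eq: "lt q T (t+1) x p \<longleftrightarrow> lt q T t x p" if "x \<noteq> q t" for x
    using next_req_shift[where q=q, OF a(1) that] next_req_shift[where q=q, OF a] unfolding lt_def by simp
  let ?S = "{x. lt q T t x p}"
  have "{x. lt q T (t+1) x p} = (?S - {q t}) \<union> (if lt q T (t+1) (q t) p then {q t} else {})"
    using eq by (intro set_eqI, case_tac "x = q t") auto
  moreover have "q t \<in> ?S" using lt_first[of t T p q, OF a] by simp
  moreover have c1: "card ?S \<ge> 1" using \<open>q t \<in> ?S\<close>
    by (metis One_nat_def Suc_leI card_gt_0_iff empty_iff finite)
  ultimately have "card {x. lt q T (t+1) x p} = card ?S - 1 + (if lt q T (t+1) (q t) p then 1 else 0)"
    by (auto simp: card_insert_if)
  then show ?thesis using c1 by (simp add: rank_lt)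
qed

lemma rank_trans_cases:
  fixes q :: "nat \<Rightarrow> 'a::{finite,linorder}"
  assumes a: "t \<le> T" "p \<noteq> q t"
  shows "(rank q T p (t+1) = rank q T p t \<and> rank q T p (t+1) > rank q T (q t) (t+1))
       \<or> (rank q T p (t+1) = rank q T p t - 1 \<and> rank q T p (t+1) < rank q T (q t) (t+1))"
proof (cases "lt q T (t+1) (q t) p")
  case True
  then show ?thesis using rank_trans[where q=q, OF a] rank_mono[OF True] rank_ge2[where q=q, OF a] by simp
next
  case False
  then have "lt q T (t+1) p (q t)" using lt_total[of p "q t" q T "t+1"] a by auto
  then show ?thesis using rank_trans[where q=q, OF a] rank_mono[of q T "t+1" p "q t"] False rank_ge2[where q=q, OF a] by simp
qed


lemma ncount_trans:
  fixes q :: "nat \<Rightarrow> 'a::{finite,linorder}"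
  assumes a: "t \<le> T" "q t \<in> A" "s \<ge> 1"
  shows "ncount q T A s (t+1) = (if s \<le> rank q T (q t) (t+1) then ncount q T A (s+1) t + 1
                                   else ncount q T A s t)"
proof -
  let ?r = "rank q T (q t) (t+1)"
  have rs: "rank q T (q t) t = 1" using rank_self[OF a(1)] .
  show ?thesis
  proof (cases "s \<le> ?r")
    case True
    have "{p \<in> A. s \<le> rank q T p (t+1)} = insert (q t) {p \<in> A. s+1 \<le> rank q T p t}"
    proof (intro set_eqI iffI)
      fix p assume p: "p \<in> {p \<in> A. s \<le> rank q T p (t+1)}"
      show "p \<in> insert (q t) {p \<in> A. s+1 \<le> rank q T p t}"
      proof (cases "p = q t")
        case False
        then show ?thesis using rank_trans_cases[where q=q, OF a(1) False] p True a by auto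
      qed simp
    next
      fix p assume p: "p \<in> insert (q t) {p \<in> A. s+1 \<le> rank q T p t}"
      show "p \<in> {p \<in> A. s \<le> rank q T p (t+1)}"
      proof (cases "p = q t")
        case False
        then show ?thesis using rank_trans_cases[where q=q, OF a(1) False] p True a by auto
      qed (use True a in simp)
    qed
    moreover have "q t \<notin> {p \<in> A. s+1 \<le> rank q T p t}" using rs a by simp
    ultimately show ?thesis using True unfolding ncount_def by simp
  next
    case False
    have "{p \<in> A. s \<le> rank q T p (t+1)} = {p \<in> A. s \<le> rank q T p t}"
    proof (intro set_eqI iffI)
      fix p assume p: "p \<in> {p \<in> A. s \<le> rank q T p (t+1)}"
      show "p \<in> {p \<in> A. s \<le> rank q T p t}"
      proof (cases "p = q t")
        case False
        then show ?thesis using rank_trans_cases[where q=q, OF a(1) False] p \<open>\<not> s \<le> ?r\<close> a by auto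
      qed (use p False in simp)
    next
      fix p assume p: "p \<in> {p \<in> A. s \<le> rank q T p t}"
      show "p \<in> {p \<in> A. s \<le> rank q T p (t+1)}"
      proof (cases "p = q t")
        case False
        then show ?thesis using rank_trans_cases[where q=q, OF a(1) False] p \<open>\<not> s \<le> ?r\<close> a by auto
      qed (use p False rs rank_ge1[of q T "q t" "t+1"] in simp)
    qed
    then show ?thesis using False unfolding ncount_def by simp
  qed
qed

definition PhiG :: "(nat \<Rightarrow> 'a::{finite,linorder}) \<Rightarrow> nat \<Rightarrow> 'a set \<Rightarrow> 'a set \<Rightarrow> nat \<Rightarrow> int" where
  "PhiG q T A B t = Max ((\<lambda>s. int (ncount q T A s t) - int (ncount q T B s t)) ` {1..CARD('a)})"

lemma Phi_PhiG: "Phi q T C Cs t = PhiG q T (C t) (Cs t) t"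
  unfolding Phi_def PhiG_def by simp

lemma PhiG_ge:
  fixes q :: "nat \<Rightarrow> 'a::{finite,linorder}"
  shows "s \<in> {1..CARD('a)} \<Longrightarrow> int (ncount q T A s t) - int (ncount q T B s t) \<le> PhiG q T A B t"
  unfolding PhiG_def by (rule Max_ge) auto

lemma PhiG_le:
  fixes q :: "nat \<Rightarrow> 'a::{finite,linorder}"
  shows "(\<And>s. s \<in> {1..CARD('a)} \<Longrightarrow> int (ncount q T A s t) - int (ncount q T B s t) \<le> X) \<Longrightarrow> PhiG q T A B t \<le> X"
  unfolding PhiG_def by (subst Max_le_iff) auto

lemma ncount_1: "ncount q T A 1 t = card A"
  unfolding ncount_def using rank_ge1[of q T _ t] by simp

lemma ncount_big:
  fixes q :: "nat \<Rightarrow> 'a::{finite,linorder}"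
  shows "ncount q T A (CARD('a)+1) t = 0"
  unfolding ncount_def using rank_le_n[of q T _ t] by (simp add: not_le less_Suc_eq_le)

lemma PhiG_nonneg:
  fixes q :: "nat \<Rightarrow> 'a::{finite,linorder}"
  shows "card A = card B \<Longrightarrow> PhiG q T A B t \<ge> 0"
  using PhiG_ge[where s=1 and q=q and A=A and B=B and t=t and T=T] ncount_1[of q T A t] ncount_1[of q T B t] by simp

lemma PhiG_shift:
  fixes q :: "nat \<Rightarrow> 'a::{finite,linorder}"
  assumes a: "t \<le> T" "q t \<in> A" "q t \<in> B" "card A = card B"
  shows "PhiG q T A B (t+1) \<le> PhiG q T A B t"
proof (rule PhiG_le)
  fix s assume s: "s \<in> {1..CARD('a)}"
  let ?r = "rank q T (q t) (t+1)"
  show "int (ncount q T A s (t+1)) - int (ncount q T B s (t+1)) \<le> PhiG q T A B t"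
  proof (cases "s \<le> ?r")
    case True
    then have e: "int (ncount q T A s (t+1)) - int (ncount q T B s (t+1))
        = int (ncount q T A (s+1) t) - int (ncount q T B (s+1) t)"
      using ncount_trans[where q=q, OF a(1) a(2)] ncount_trans[where q=q, OF a(1) a(3)] s by simp
    show ?thesis
    proof (cases "s+1 \<le> CARD('a)")
      case True
      then show ?thesis using e PhiG_ge[where s="s+1" and q=q and A=A and B=B and t=t and T=T] by simp
    next
      case False
      then have "s + 1 = CARD('a) + 1" using s by simp
      then show ?thesis using e PhiG_nonneg[OF a(4), of q T t] ncount_big[of q T A t] ncount_big[of q T B t]
        by simp
    qed
  next
    case False
    then have e: "int (ncount q T A s (t+1)) - int (ncount q T B s (t+1))
        = int (ncount q T A s t) - int (ncount q T B s t)"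
      using ncount_trans[where q=q, OF a(1) a(2)] ncount_trans[where q=q, OF a(1) a(3)] s by simp
    then show ?thesis using PhiG_ge[where q=q and A=A and B=B and t=t and T=T, OF s] by simp
  qed
qed

lemma ncount_off:
  fixes q :: "nat \<Rightarrow> 'a::{finite,linorder}"
  assumes "card B = card B'"
  shows "ncount q T B s t \<le> ncount q T B' s t + card (B' - B)"
proof -
  have "{p \<in> B. s \<le> rank q T p t} \<subseteq> {p \<in> B'. s \<le> rank q T p t} \<union> (B - B')" by auto
  then have "ncount q T B s t \<le> card ({p \<in> B'. s \<le> rank q T p t} \<union> (B - B'))"
    unfolding ncount_def by (simp add: card_mono)
  also have "\<dots> \<le> ncount q T B' s t + card (B - B')"
    unfolding ncount_def by (rule card_Un_le)
  also have "card (B - B') = card (B' - B)"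
    using assms by (simp add: card_Diff_subset_Int Int_commute)
  finally show ?thesis .
qed

lemma PhiG_step:
  fixes q :: "nat \<Rightarrow> 'a::{finite,linorder}"
  assumes t: "t \<le> T" and kn: "k < CARD('a)"
    and cC: "card (C t) = k" "card (C (t+1)) = k" and cS: "card (Cs t) = k" "card (Cs (t+1)) = k"
    and qS: "q t \<in> Cs (t+1)"
    and upd: "C (t+1) = (if q t \<in> C t then C t
                else insert (q t) (C t - {ARG_MAX (\<lambda>p. rank q T p t) p. p \<in> C t}))"
  shows "int (fetched C t) + PhiG q T (C (t+1)) (Cs (t+1)) t - PhiG q T (C t) (Cs t) t \<le> int (fetched Cs t)"
proof -
  define P where "P = PhiG q T (C t) (Cs t) t"
  define Of where "Of = fetched Cs t"
  have off: "ncount q T (Cs t) s t \<le> ncount q T (Cs (t+1)) s t + Of" for s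
    unfolding Of_def fetched_def using ncount_off[of "Cs t" "Cs (t+1)" q T s t] cS by simp
  have Dle: "s \<in> {1..CARD('a)} \<Longrightarrow> int (ncount q T (C t) s t) - int (ncount q T (Cs t) s t) \<le> P" for s
    unfolding P_def by (rule PhiG_ge)
  have P0: "P \<ge> 0" unfolding P_def using cC cS by (intro PhiG_nonneg) simp
  show ?thesis
  proof (cases "q t \<in> C t")
    case True
    then have "C (t+1) = C t" using upd by simp
    then have f0: "fetched C t = 0" unfolding fetched_def by simp
    have "PhiG q T (C (t+1)) (Cs (t+1)) t \<le> P + int Of"
    proof (rule PhiG_le)
      fix s assume s: "s \<in> {1..CARD('a)}"
      show "int (ncount q T (C (t+1)) s t) - int (ncount q T (Cs (t+1)) s t) \<le> P + int Of"
        using Dle[OF s] off[of s] \<open>C (t+1) = C t\<close> by simp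
    qed
    then show ?thesis using f0 unfolding P_def Of_def by simp
  next
    case False
    define y where "y = (ARG_MAX (\<lambda>p. rank q T p t) p. p \<in> C t)"
    have kpos: "k > 0" using qS cS(2) by (metis card_gt_0_iff empty_iff finite)
    then obtain p0 where "p0 \<in> C t" using cC(1) by (metis card.empty ex_in_conv less_irrefl)
    then have ym: "y \<in> C t \<and> (\<forall>p. p \<in> C t \<longrightarrow> rank q T p t \<le> rank q T y t)"
      unfolding y_def
      by (rule arg_max_nat_lemma[where b="CARD('a)+1"]) (simp add: rank_le_n less_Suc_eq_le)
    have Cn: "C (t+1) = insert (q t) (C t - {y})" using upd False unfolding y_def by simp
    have "C (t+1) - C t = {q t}" using Cn False by auto
    then have f1: "fetched C t = 1" unfolding fetched_def by simp
    have z: "0 \<le> P - 1 + int Of"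
    proof (cases "Of = 0")
      case False then show ?thesis using P0 by simp
    next
      case True
      then have "Cs (t+1) - Cs t = {}" unfolding Of_def fetched_def by simp
      then have qs: "q t \<in> Cs t" using qS by auto
      have "2 \<le> rank q T p t" if "p \<in> C t" for p
      proof -
        have "p \<noteq> q t" using that \<open>q t \<notin> C t\<close> by auto
        then show ?thesis using rank_ge2[where q=q and t=t and T=T and p=p] t by simp
      qed
      then have "{p \<in> C t. 2 \<le> rank q T p t} = C t" by auto
      then have a1: "ncount q T (C t) 2 t = k" unfolding ncount_def using cC by simp
      have "{p \<in> Cs t. 2 \<le> rank q T p t} \<subseteq> Cs t - {q t}"
        using rank_self[OF t, of q] by auto
      then have "ncount q T (Cs t) 2 t \<le> card (Cs t - {q t})" unfolding ncount_def
        by (simp add: card_mono)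
      then have a2: "ncount q T (Cs t) 2 t \<le> k - 1" using qs cS by simp
      have "2 \<in> {1..CARD('a)}" using kpos kn by simp
      from Dle[OF this] a1 a2 kpos show ?thesis by simp
    qed
    have "PhiG q T (C (t+1)) (Cs (t+1)) t \<le> P - 1 + int Of"
    proof (rule PhiG_le)
      fix s assume s: "s \<in> {1..CARD('a)}"
      show "int (ncount q T (C (t+1)) s t) - int (ncount q T (Cs (t+1)) s t) \<le> P - 1 + int Of"
      proof (cases "s = 1")
        case True
        then show ?thesis using z ncount_1[of q T "C (t+1)" t] ncount_1[of q T "Cs (t+1)" t] cC cS by simp
      next
        case False
        then have s2: "s \<ge> 2" using s by simp
        have e1: "{p \<in> C (t+1). s \<le> rank q T p t} = {p \<in> C t - {y}. s \<le> rank q T p t}"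
          using Cn s2 rank_self[OF t, of q] by auto
        show ?thesis
        proof (cases "s \<le> rank q T y t")
          case True
          have "{p \<in> C t. s \<le> rank q T p t} = insert y {p \<in> C t - {y}. s \<le> rank q T p t}"
            using ym True by auto
          then have "ncount q T (C t) s t = ncount q T (C (t+1)) s t + 1"
            unfolding ncount_def e1 by simp
          then show ?thesis using Dle[OF s] off[of s] by simp
        next
          case False
          have "{p \<in> C t - {y}. s \<le> rank q T p t} = {}" using ym False by force
          then have "ncount q T (C (t+1)) s t = 0" unfolding ncount_def e1 by simp
          then show ?thesis using z by simp
        qed
      qed
    qed
    then show ?thesis using f1 unfolding P_def Of_def by simp
  qed
qed

theorem mainTheorem11:
  fixes q :: "nat \<Rightarrow> 'a::{finite,linorder}"
    and T k :: nat
    and C Cs :: "nat \<Rightarrow> 'a set"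
  assumes "k < CARD('a)"
    and "is_FiF k q T C"
    and "is_OFF k q T Cs"
    and "\<forall>t\<in>{1..T}. fetched Cs t \<le> 1"
  shows "(\<forall>t\<in>{1..T}. int (fetched C t) + Phi q T C Cs (t + 1) - Phi q T C Cs t
                        \<le> int (fetched Cs t))
       \<and> (\<forall>t\<in>{1..T+1}. Phi q T C Cs t \<ge> 0)
       \<and> int (\<Sum>t=1..T. fetched C t) \<le> int (\<Sum>t=1..T. fetched Cs t) + Phi q T C Cs 1"
proof -
  have cC: "\<forall>t\<in>{1..T+1}. card (C t) = k" and
    upd: "\<forall>t\<in>{1..T}. C (t + 1) = (if q t \<in> C t then C t
         else insert (q t) (C t - {ARG_MAX (\<lambda>p. rank q T p t) p. p \<in> C t}))"
    using assms(2) unfolding is_FiF_def by auto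
  have cS: "\<forall>t\<in>{1..T+1}. card (Cs t) = k" and qS: "\<forall>t\<in>{1..T}. q t \<in> Cs (t + 1)"
    using assms(3) unfolding is_OFF_def by auto
  have nn: "\<forall>t\<in>{1..T+1}. Phi q T C Cs t \<ge> 0"
    using cC cS by (auto simp: Phi_PhiG intro: PhiG_nonneg)
  have st: "int (fetched C t) + Phi q T C Cs (t + 1) - Phi q T C Cs t \<le> int (fetched Cs t)"
    if t: "t \<in> {1..T}" for t
  proof -
    have tT: "t \<le> T" using t by simp
    have c: "card (C t) = k" "card (C (t+1)) = k" "card (Cs t) = k" "card (Cs (t+1)) = k"
      using cC cS t by auto
    have u: "C (t + 1) = (if q t \<in> C t then C t
         else insert (q t) (C t - {ARG_MAX (\<lambda>p. rank q T p t) p. p \<in> C t}))"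
      using upd t by auto
    have qs: "q t \<in> Cs (t+1)" using qS t by auto
    have qc: "q t \<in> C (t+1)" using u by (auto split: if_splits)
    have A: "int (fetched C t) + PhiG q T (C (t+1)) (Cs (t+1)) t - PhiG q T (C t) (Cs t) t \<le> int (fetched Cs t)"
      by (rule PhiG_step[OF tT assms(1) c(1,2) c(3,4) qs u])
    have B: "PhiG q T (C (t+1)) (Cs (t+1)) (t+1) \<le> PhiG q T (C (t+1)) (Cs (t+1)) t"
      using PhiG_shift[where q=q, OF tT qc qs] c by simp
    show ?thesis using A B by (simp add: Phi_PhiG)
  qed
  have sum: "int (\<Sum>t=1..m. fetched C t) \<le> int (\<Sum>t=1..m. fetched Cs t) + Phi q T C Cs 1 - Phi q T C Cs (m+1)"
    if "m \<le> T" for m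
    using that
  proof (induction m)
    case 0 then show ?case by simp
  next
    case (Suc m)
    have "int (fetched C (Suc m)) + Phi q T C Cs (Suc m + 1) - Phi q T C Cs (Suc m) \<le> int (fetched Cs (Suc m))"
      using st[of "Suc m"] Suc.prems by simp
    then show ?case using Suc by simp
  qed
  have "int (\<Sum>t=1..T. fetched C t) \<le> int (\<Sum>t=1..T. fetched Cs t) + Phi q T C Cs 1"
  proof -
    have "Phi q T C Cs (T+1) \<ge> 0" using nn by simp
    then show ?thesis using sum[of T] by linarith
  qed
  then show ?thesis using st nn by blast
qed

end
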